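(* If $\delta:\mathrm{Pol}(S^1)\oplus\mathrm{Pol}(S^1)\to C(S^1)\oplus C(S^1)$ is any derivation, then there exist functions $f,g\in C(S^1)$ such that $$\delta=\delta_{f,g}:=\Big(f(x)\frac{1}{i}\frac{d}{dx},\ g(x)\frac{1}{i}\frac{d}{dx}\Big).$$
   Context: $\mathrm{Pol}(S^1)$ is the algebra of trigonometric polynomials in $x$ (polynomials in $e^{ix},e^{-ix}$), regarded as a subalgebra of $C(S^1)$; $\mathrm{Pol}(S^1)\oplus\mathrm{Pol}(S^1)$ is a subalgebra of $C(S^1)\oplus C(S^1)$ with componentwise operations, and a derivation is a linear map into $C(S^1)\oplus C(S^1)$ satisfying the Leibniz rule with respect to this inclusion. *)

theory Defs
  imports "HOL-Analysis.Analysis"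
begin

text \<open>The circle S^1 is parametrised by the angle x (a real number, 2pi-periodic).
  Functions on S^1 are represented as 2pi-periodic functions real => complex.\<close>

definition trig_pol :: "(real \<Rightarrow> complex) set" where
  "trig_pol = {p. \<exists>(N::int) (c::int \<Rightarrow> complex).
      \<forall>x. p x = (\<Sum>k\<in>{-N..N}. c k * exp (\<i> * of_int k * of_real x))}"

definition cont_S1 :: "(real \<Rightarrow> complex) set" where
  "cont_S1 = {f. continuous_on UNIV f \<and> (\<forall>x. f (x + 2 * pi) = f x)}"

definition padd :: "(real \<Rightarrow> complex) \<times> (real \<Rightarrow> complex) \<Rightarrow> (real \<Rightarrow> complex) \<times> (real \<Rightarrow> complex)
    \<Rightarrow> (real \<Rightarrow> complex) \<times> (real \<Rightarrow> complex)" where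
  "padd a b = ((\<lambda>x. fst a x + fst b x), (\<lambda>x. snd a x + snd b x))"

definition pmul :: "(real \<Rightarrow> complex) \<times> (real \<Rightarrow> complex) \<Rightarrow> (real \<Rightarrow> complex) \<times> (real \<Rightarrow> complex)
    \<Rightarrow> (real \<Rightarrow> complex) \<times> (real \<Rightarrow> complex)" where
  "pmul a b = ((\<lambda>x. fst a x * fst b x), (\<lambda>x. snd a x * snd b x))"

definition pscale :: "complex \<Rightarrow> (real \<Rightarrow> complex) \<times> (real \<Rightarrow> complex) \<Rightarrow> (real \<Rightarrow> complex) \<times> (real \<Rightarrow> complex)" where
  "pscale c a = ((\<lambda>x. c * fst a x), (\<lambda>x. c * snd a x))"

text \<open>Only its values on Pol(S^1) x Pol(S^1) are constrained.\<close>
definition pol_derivation ::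
  "((real \<Rightarrow> complex) \<times> (real \<Rightarrow> complex) \<Rightarrow> (real \<Rightarrow> complex) \<times> (real \<Rightarrow> complex)) \<Rightarrow> bool" where
  "pol_derivation \<delta> \<longleftrightarrow>
     (\<forall>a \<in> trig_pol \<times> trig_pol. \<delta> a \<in> cont_S1 \<times> cont_S1) \<and>
     (\<forall>a \<in> trig_pol \<times> trig_pol. \<forall>b \<in> trig_pol \<times> trig_pol. \<delta> (padd a b) = padd (\<delta> a) (\<delta> b)) \<and>
     (\<forall>c. \<forall>a \<in> trig_pol \<times> trig_pol. \<delta> (pscale c a) = pscale c (\<delta> a)) \<and>
     (\<forall>a \<in> trig_pol \<times> trig_pol. \<forall>b \<in> trig_pol \<times> trig_pol.
        \<delta> (pmul a b) = padd (pmul a (\<delta> b)) (pmul (\<delta> a) b))"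

end

theory Submission
  imports Defs
begin

definition Ek :: "int \<Rightarrow> real \<Rightarrow> complex" where
  "Ek k x = exp (\<i> * of_int k * of_real x)"

lemma Ek_mult: "Ek a x * Ek b x = Ek (a + b) x"
  by (simp add: Ek_def exp_add[symmetric] algebra_simps)

lemma Ek_0: "Ek 0 x = 1" by (simp add: Ek_def)

lemma finsum_trig:
  assumes "finite S"
  shows "(\<lambda>x. \<Sum>k\<in>S. c k * Ek k x) \<in> trig_pol"
proof -
  define N where "N = (\<Sum>k\<in>S. \<bar>k\<bar>)"
  have sub: "S \<subseteq> {-N..N}"
  proof
    fix k assume "k \<in> S"
    hence "\<bar>k\<bar> \<le> N" unfolding N_def using assms
      by (metis abs_ge_zero member_le_sum)
    thus "k \<in> {-N..N}" by auto
  qed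
  have "\<forall>x. (\<Sum>k\<in>S. c k * Ek k x) =
      (\<Sum>k\<in>{-N..N}. (\<lambda>k. if k \<in> S then c k else 0) k * exp (\<i> * of_int k * of_real x))"
  proof
    fix x
    have "(\<Sum>k\<in>{-N..N}. (\<lambda>k. if k \<in> S then c k else 0) k * exp (\<i> * of_int k * of_real x))
       = (\<Sum>k\<in>{-N..N}. if k \<in> S then c k * Ek k x else 0)"
      by (rule sum.cong) (auto simp: Ek_def)
    also have "\<dots> = (\<Sum>k\<in>{-N..N} \<inter> S. c k * Ek k x)"
      by (rule sum.inter_restrict[symmetric]) simp
    also have "{-N..N} \<inter> S = S" using sub by auto
    finally show "(\<Sum>k\<in>S. c k * Ek k x) =
      (\<Sum>k\<in>{-N..N}. (\<lambda>k. if k \<in> S then c k else 0) k * exp (\<i> * of_int k * of_real x))" by simp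
  qed
  thus ?thesis unfolding trig_pol_def mem_Collect_eq by (intro exI[of _ N]) (rule exI)
qed

lemma single_trig: "(\<lambda>x. c * Ek k x) \<in> trig_pol"
  using finsum_trig[of "{k}" "\<lambda>_. c"] by simp

lemma Ek_trig: "Ek k \<in> trig_pol"
  using single_trig[of 1 k] by simp

lemma one_trig: "(\<lambda>x. 1) \<in> trig_pol"
proof -
  have "Ek 0 = (\<lambda>x. 1)" by (simp add: Ek_0 fun_eq_iff)
  thus ?thesis using Ek_trig[of 0] by simp
qed

lemma Ek_cont: "Ek k \<in> cont_S1"
proof -
  have "continuous_on UNIV (Ek k)" unfolding Ek_def by (intro continuous_intros)
  moreover have "Ek k (x + 2 * pi) = Ek k x" for x
  proof -
    have "Ek k (x + 2 * pi) = Ek k x * exp ((2 * of_int k * pi) * \<i>)"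
      by (simp add: Ek_def exp_add[symmetric] algebra_simps)
    also have "exp ((2 * of_int k * pi) * \<i>) = 1"
      by (rule exp_integer_2pi) simp
    finally show ?thesis by simp
  qed
  ultimately show ?thesis by (simp add: cont_S1_def)
qed

lemma cont_mult: "f \<in> cont_S1 \<Longrightarrow> g \<in> cont_S1 \<Longrightarrow> (\<lambda>x. f x * g x) \<in> cont_S1"
  by (auto simp: cont_S1_def intro: continuous_on_mult)

lemma vd_sum:
  assumes "finite S"
  shows "vector_derivative (\<lambda>x. \<Sum>k\<in>S. c k * Ek k x) (at x)
       = (\<Sum>k\<in>S. c k * (\<i> * of_int k * Ek k x))"
proof -
  have "((\<lambda>z. \<Sum>k\<in>S. c k * exp (\<i> * of_int k * z)) has_field_derivative
        (\<Sum>k\<in>S. c k * (\<i> * of_int k * exp (\<i> * of_int k * of_real x)))) (at (of_real x))"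
    by (auto intro!: derivative_eq_intros sum.cong)
  from has_vector_derivative_real_field[OF this, of UNIV]
  show ?thesis unfolding Ek_def by (intro vector_derivative_at) simp
qed


lemma deriv_char:
  fixes D :: "(real \<Rightarrow> complex) \<Rightarrow> (real \<Rightarrow> complex)"
  assumes add: "\<And>p q. p \<in> trig_pol \<Longrightarrow> q \<in> trig_pol \<Longrightarrow> D (\<lambda>x. p x + q x) = (\<lambda>x. D p x + D q x)"
  and scale: "\<And>c p. p \<in> trig_pol \<Longrightarrow> D (\<lambda>x. c * p x) = (\<lambda>x. c * D p x)"
  and mul: "\<And>p q. p \<in> trig_pol \<Longrightarrow> q \<in> trig_pol \<Longrightarrow> D (\<lambda>x. p x * q x) = (\<lambda>x. p x * D q x + D p x * q x)"
  and cont: "\<And>p. p \<in> trig_pol \<Longrightarrow> D p \<in> cont_S1"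
  shows "\<exists>f\<in>cont_S1. \<forall>p\<in>trig_pol. D p = (\<lambda>x. f x * ((1 / \<i>) * vector_derivative p (at x)))"
proof -
  define f where "f x = D (Ek 1) x * Ek (-1) x" for x
  have fc: "f \<in> cont_S1" unfolding f_def
    by (intro cont_mult cont Ek_trig Ek_cont)
  have inv: "Ek (-a) x * Ek a x = 1" for a x by (simp add: Ek_mult Ek_0)
  have D1: "D (Ek 1) x = f x * Ek 1 x" for x
    using inv[of 1 x] unfolding f_def by (metis mult.assoc mult_1_right)
  have Done: "D (\<lambda>x. 1) = (\<lambda>x. 0)"
  proof -
    have "D (\<lambda>x. 1 * 1) = (\<lambda>x. 1 * D (\<lambda>x. 1) x + D (\<lambda>x. 1) x * 1)"
      by (rule mul) (rule one_trig)+
    thus ?thesis by (simp add: fun_eq_iff)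
  qed
  have Dzero: "D (\<lambda>x. 0) = (\<lambda>x. 0)"
    using scale[of "\<lambda>x. 1" 0, OF one_trig] by simp
  have Epos: "D (Ek (int n)) = (\<lambda>x. of_int (int n) * f x * Ek (int n) x)" for n
  proof (induction n)
    case 0
    have "Ek 0 = (\<lambda>x. 1)" by (simp add: Ek_0 fun_eq_iff)
    thus ?case using Done by simp
  next
    case (Suc n)
    have e: "Ek (int (Suc n)) = (\<lambda>x. Ek (int n) x * Ek 1 x)"
      by (simp add: Ek_mult fun_eq_iff add.commute)
    have "D (\<lambda>x. Ek (int n) x * Ek 1 x) = (\<lambda>x. Ek (int n) x * D (Ek 1) x + D (Ek (int n)) x * Ek 1 x)"
      using mul[OF Ek_trig Ek_trig] by simp
    also have "\<dots> = (\<lambda>x. of_int (int (Suc n)) * f x * Ek (int (Suc n)) x)"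
      unfolding Suc D1 e by (simp add: fun_eq_iff algebra_simps)
    finally show ?case using e by simp
  qed
  have Eall: "D (Ek k) = (\<lambda>x. of_int k * f x * Ek k x)" for k
  proof (cases "k \<ge> 0")
    case True
    then obtain n where "k = int n" by (metis nonneg_eq_int)
    thus ?thesis using Epos by simp
  next
    case False
    then obtain n where kn: "k = - int n" by (metis le_cases neg_0_le_iff_le minus_minus nonneg_eq_int)
    have e: "(\<lambda>x. Ek k x * Ek (int n) x) = (\<lambda>x. 1)" using inv kn by simp
    have "D (\<lambda>x. Ek k x * Ek (int n) x) = (\<lambda>x. Ek k x * D (Ek (int n)) x + D (Ek k) x * Ek (int n) x)"
      using mul[OF Ek_trig Ek_trig] by simp
    hence h: "Ek k x * D (Ek (int n)) x + D (Ek k) x * Ek (int n) x = 0" for x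
      using Done e by (metis)
    show ?thesis
    proof
      fix x
      have i: "Ek k x * Ek (int n) x = 1" using inv kn by simp
      have "D (Ek k) x = D (Ek k) x * (Ek (int n) x * Ek k x)" using i by (simp add: mult.commute)
      also have "\<dots> = (D (Ek k) x * Ek (int n) x) * Ek k x" by (simp add: mult.assoc)
      also have "D (Ek k) x * Ek (int n) x = - (Ek k x * D (Ek (int n)) x)" using h[of x]
        by (simp add: eq_neg_iff_add_eq_0 add.commute)
      also have "- (Ek k x * D (Ek (int n)) x) * Ek k x = - (of_int (int n) * f x * Ek k x) * (Ek k x * Ek (int n) x)"
        using Epos[of n] by (simp add: algebra_simps)
      also have "\<dots> = of_int k * f x * Ek k x" using i kn by simp
      finally show "D (Ek k) x = of_int k * f x * Ek k x" .
    qed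
  qed
  have lin: "finite S \<Longrightarrow> D (\<lambda>x. \<Sum>k\<in>S. c k * Ek k x) = (\<lambda>x. \<Sum>k\<in>S. c k * (of_int k * f x * Ek k x))" for S c
  proof (induction S rule: finite_induct)
    case empty
    then show ?case using Dzero by simp
  next
    case (insert a S)
    have "D (\<lambda>x. \<Sum>k\<in>insert a S. c k * Ek k x) = D (\<lambda>x. c a * Ek a x + (\<Sum>k\<in>S. c k * Ek k x))"
      using insert by simp
    also have "\<dots> = (\<lambda>x. D (\<lambda>x. c a * Ek a x) x + D (\<lambda>x. \<Sum>k\<in>S. c k * Ek k x) x)"
      by (rule add[OF single_trig finsum_trig[OF insert(1)]])
    also have "\<dots> = (\<lambda>x. \<Sum>k\<in>insert a S. c k * (of_int k * f x * Ek k x))"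
      using insert scale[OF Ek_trig, of "c a" a] Eall[of a] by simp
    finally show ?case .
  qed
  have "D p = (\<lambda>x. f x * ((1 / \<i>) * vector_derivative p (at x)))" if p: "p \<in> trig_pol" for p
  proof -
    from p obtain N c where pc: "\<forall>x. p x = (\<Sum>k\<in>{-N..N}. c k * exp (\<i> * of_int k * of_real x))"
      unfolding trig_pol_def by blast
    hence pe: "p = (\<lambda>x. \<Sum>k\<in>{-N..N}. c k * Ek k x)" by (simp add: fun_eq_iff Ek_def)
    show ?thesis unfolding pe lin[OF finite_atLeastAtMost_int] vd_sum[OF finite_atLeastAtMost_int]
      by (simp add: fun_eq_iff sum_distrib_left algebra_simps)
  qed
  thus ?thesis using fc by blast
qed

theorem mainTheorem13:
  assumes "pol_derivation \<delta>"
  shows "\<exists>f \<in> cont_S1. \<exists>g \<in> cont_S1. \<forall>p \<in> trig_pol. \<forall>q \<in> trig_pol.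
           \<delta> (p, q) = ((\<lambda>x. f x * ((1 / \<i>) * vector_derivative p (at x))),
                        (\<lambda>x. g x * ((1 / \<i>) * vector_derivative q (at x))))"
proof -
  note A = assms[unfolded pol_derivation_def]
  have C: "\<And>a. a \<in> trig_pol \<times> trig_pol \<Longrightarrow> \<delta> a \<in> cont_S1 \<times> cont_S1" using A by blast
  have Ad: "\<And>a b. a \<in> trig_pol \<times> trig_pol \<Longrightarrow> b \<in> trig_pol \<times> trig_pol \<Longrightarrow> \<delta> (padd a b) = padd (\<delta> a) (\<delta> b)"
    using A by blast
  have Sc: "\<And>c a. a \<in> trig_pol \<times> trig_pol \<Longrightarrow> \<delta> (pscale c a) = pscale c (\<delta> a)" using A by blast
  have Mu: "\<And>a b. a \<in> trig_pol \<times> trig_pol \<Longrightarrow> b \<in> trig_pol \<times> trig_pol \<Longrightarrow>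
        \<delta> (pmul a b) = padd (pmul a (\<delta> b)) (pmul (\<delta> a) b)" using A by blast
  have z: "(\<lambda>x. 0) \<in> trig_pol"
    using finsum_trig[of "{}" "\<lambda>_. 0"] by simp
  have o: "(\<lambda>x. 1) \<in> trig_pol" by (rule one_trig)
  define D1 where "D1 p = fst (\<delta> (p, \<lambda>x. 0))" for p
  define D2 where "D2 q = snd (\<delta> (\<lambda>x. 0, q))" for q
  have s1: "snd (\<delta> (p, \<lambda>x. 0)) = (\<lambda>x. 0)" if "p \<in> trig_pol" for p
  proof -
    have "pmul (\<lambda>x. 1, \<lambda>x. 0) (p, \<lambda>x. 0) = (p, \<lambda>x. 0)" by (simp add: pmul_def)
    hence "\<delta> (p, \<lambda>x. 0) = padd (pmul (\<lambda>x. 1, \<lambda>x. 0) (\<delta> (p, \<lambda>x. 0))) (pmul (\<delta> (\<lambda>x. 1, \<lambda>x. 0)) (p, \<lambda>x. 0))"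
      using Mu[of "(\<lambda>x. 1, \<lambda>x. 0)" "(p, \<lambda>x. 0)"] that o z by simp
    hence "snd (\<delta> (p, \<lambda>x. 0)) = snd (padd (pmul (\<lambda>x. 1, \<lambda>x. 0) (\<delta> (p, \<lambda>x. 0))) (pmul (\<delta> (\<lambda>x. 1, \<lambda>x. 0)) (p, \<lambda>x. 0)))"
      by simp
    thus ?thesis by (simp add: padd_def pmul_def)
  qed
  have s2: "fst (\<delta> (\<lambda>x. 0, q)) = (\<lambda>x. 0)" if "q \<in> trig_pol" for q
  proof -
    have "pmul (\<lambda>x. 0, \<lambda>x. 1) (\<lambda>x. 0, q) = (\<lambda>x. 0, q)" by (simp add: pmul_def)
    hence "\<delta> (\<lambda>x. 0, q) = padd (pmul (\<lambda>x. 0, \<lambda>x. 1) (\<delta> (\<lambda>x. 0, q))) (pmul (\<delta> (\<lambda>x. 0, \<lambda>x. 1)) (\<lambda>x. 0, q))"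
      using Mu[of "(\<lambda>x. 0, \<lambda>x. 1)" "(\<lambda>x. 0, q)"] that o z by simp
    hence "fst (\<delta> (\<lambda>x. 0, q)) = fst (padd (pmul (\<lambda>x. 0, \<lambda>x. 1) (\<delta> (\<lambda>x. 0, q))) (pmul (\<delta> (\<lambda>x. 0, \<lambda>x. 1)) (\<lambda>x. 0, q)))"
      by simp
    thus ?thesis by (simp add: padd_def pmul_def)
  qed
  have split: "\<delta> (p, q) = (D1 p, D2 q)" if "p \<in> trig_pol" "q \<in> trig_pol" for p q
  proof -
    have "padd (p, \<lambda>x. 0) (\<lambda>x. 0, q) = (p, q)" by (simp add: padd_def)
    hence "\<delta> (p, q) = padd (\<delta> (p, \<lambda>x. 0)) (\<delta> (\<lambda>x. 0, q))"
      using Ad[of "(p, \<lambda>x. 0)" "(\<lambda>x. 0, q)"] that z by simp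
    thus ?thesis using s1[OF that(1)] s2[OF that(2)] unfolding D1_def D2_def
      by (simp add: padd_def prod_eq_iff)
  qed
  have "\<exists>f\<in>cont_S1. \<forall>p\<in>trig_pol. D1 p = (\<lambda>x. f x * ((1 / \<i>) * vector_derivative p (at x)))"
  proof (rule deriv_char)
    fix p q assume pq: "p \<in> trig_pol" "q \<in> trig_pol"
    have "padd (p, \<lambda>x. 0) (q, \<lambda>x. 0) = (\<lambda>x. p x + q x, \<lambda>x. 0)" by (simp add: padd_def)
    thus "D1 (\<lambda>x. p x + q x) = (\<lambda>x. D1 p x + D1 q x)"
      using Ad[of "(p, \<lambda>x. 0)" "(q, \<lambda>x. 0)"] pq z unfolding D1_def by (simp add: padd_def)
    have "pmul (p, \<lambda>x. 0) (q, \<lambda>x. 0) = (\<lambda>x. p x * q x, \<lambda>x. 0)" by (simp add: pmul_def)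
    thus "D1 (\<lambda>x. p x * q x) = (\<lambda>x. p x * D1 q x + D1 p x * q x)"
      using Mu[of "(p, \<lambda>x. 0)" "(q, \<lambda>x. 0)"] pq z unfolding D1_def by (simp add: padd_def pmul_def)
  next
    fix c p assume p: "p \<in> trig_pol"
    have "pscale c (p, \<lambda>x. 0) = (\<lambda>x. c * p x, \<lambda>x. 0)" by (simp add: pscale_def)
    thus "D1 (\<lambda>x. c * p x) = (\<lambda>x. c * D1 p x)"
      using Sc[of "(p, \<lambda>x. 0)" c] p z unfolding D1_def by (simp add: pscale_def)
  next
    fix p assume p: "p \<in> trig_pol"
    show "D1 p \<in> cont_S1" using C[of "(p, \<lambda>x. 0)"] p z unfolding D1_def by auto
  qed
  moreover
  have "\<exists>g\<in>cont_S1. \<forall>q\<in>trig_pol. D2 q = (\<lambda>x. g x * ((1 / \<i>) * vector_derivative q (at x)))"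
  proof (rule deriv_char)
    fix p q assume pq: "p \<in> trig_pol" "q \<in> trig_pol"
    have "padd (\<lambda>x. 0, p) (\<lambda>x. 0, q) = (\<lambda>x. 0, \<lambda>x. p x + q x)" by (simp add: padd_def)
    thus "D2 (\<lambda>x. p x + q x) = (\<lambda>x. D2 p x + D2 q x)"
      using Ad[of "(\<lambda>x. 0, p)" "(\<lambda>x. 0, q)"] pq z unfolding D2_def by (simp add: padd_def)
    have "pmul (\<lambda>x. 0, p) (\<lambda>x. 0, q) = (\<lambda>x. 0, \<lambda>x. p x * q x)" by (simp add: pmul_def)
    thus "D2 (\<lambda>x. p x * q x) = (\<lambda>x. p x * D2 q x + D2 p x * q x)"
      using Mu[of "(\<lambda>x. 0, p)" "(\<lambda>x. 0, q)"] pq z unfolding D2_def by (simp add: padd_def pmul_def)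
  next
    fix c p assume p: "p \<in> trig_pol"
    have "pscale c (\<lambda>x. 0, p) = (\<lambda>x. 0, \<lambda>x. c * p x)" by (simp add: pscale_def)
    thus "D2 (\<lambda>x. c * p x) = (\<lambda>x. c * D2 p x)"
      using Sc[of "(\<lambda>x. 0, p)" c] p z unfolding D2_def by (simp add: pscale_def)
  next
    fix p assume p: "p \<in> trig_pol"
    show "D2 p \<in> cont_S1" using C[of "(\<lambda>x. 0, p)"] p z unfolding D2_def by auto
  qed
  ultimately obtain f g where "f \<in> cont_S1" "g \<in> cont_S1"
    "\<forall>p\<in>trig_pol. D1 p = (\<lambda>x. f x * ((1 / \<i>) * vector_derivative p (at x)))"
    "\<forall>q\<in>trig_pol. D2 q = (\<lambda>x. g x * ((1 / \<i>) * vector_derivative q (at x)))" by blast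
  thus ?thesis using split by (intro bexI[of _ f] bexI[of _ g]) auto
qed

end
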